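(* As formal power series in $y$ with coefficients in $\mathbb{Q}(x)$, $$\sum_{n=0}^{\infty}H_n(x)y^n=\frac{1-xy(1+y-y^2)}{(1-y)(1-xy)(1-xy-2xy^2)}.$$ In particular, for every $n\geq 0$, $$H_n(x)=\frac{1}{1-3x}+\frac{1}{2}x^n+h_n(x),\qquad h_n(x)=\frac{(\sqrt{2x}\,\mathrm{i})^{n}}{2(1-3x)}\left(8T_n\!\left(-\frac{\sqrt{2x}\,\mathrm{i}}{4}\right)-3(x+3)U_n\!\left(-\frac{\sqrt{2x}\,\mathrm{i}}{4}\right)\right),$$ where $\mathrm{i}^2=-1$ and $T_n$, $U_n$ are the Chebyshev polynomials of the first and second kind (the expressions $(\sqrt{2x}\,\mathrm{i})^nT_n(-\sqrt{2x}\,\mathrm{i}/4)$ and $(\sqrt{2x}\,\mathrm{i})^nU_n(-\sqrt{2x}\,\mathrm{i}/4)$ are polynomials in $x$, so this is an identity of rational functions in $x$).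
   Context: The Stern polynomials $B_n(t)\in\mathbb{Z}[t]$ are defined by $B_0(t)=0$, $B_1(t)=1$, and for $n\geq 1$: $B_{2n}(t)=tB_n(t)$, $B_{2n+1}(t)=B_n(t)+B_{n+1}(t)$. For $n\geq1$ let $e(n)=\deg B_n(t)$, and for $n\ge 0$ let $H_n(x)=\sum_{m=1}^{2^n}x^{e(m)}$. Chebyshev polynomials: $T_n(\cos\theta)=\cos(n\theta)$, $U_n(\cos\theta)=\sin((n+1)\theta)/\sin\theta$; equivalently $\sum_n T_n(a)z^n=(1-az)/(1-2az+z^2)$ and $\sum_n U_n(a)z^n=1/(1-2az+z^2)$. *)

theory Defs
  imports Complex_Main "HOL-Computational_Algebra.Computational_Algebra"
begin

function stern :: "nat \<Rightarrow> int poly" where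
  "stern n = (if n = 0 then 0 else if n = 1 then 1
              else if even n then [:0, 1:] * stern (n div 2)
              else stern (n div 2) + stern (n div 2 + 1))"
  by auto
termination by (relation "measure id") (auto elim!: oddE)

declare stern.simps [simp del]

definition e :: "nat \<Rightarrow> nat" where
  "e n = degree (stern n)"

definition H :: "nat \<Rightarrow> int poly" where
  "H n = (\<Sum>m = 1..2 ^ n. monom 1 (e m))"

fun chebT :: "nat \<Rightarrow> 'a::comm_ring_1 \<Rightarrow> 'a" where
  "chebT 0 a = 1"
| "chebT (Suc 0) a = a"
| "chebT (Suc (Suc n)) a = 2 * a * chebT (Suc n) a - chebT n a"

fun chebU :: "nat \<Rightarrow> 'a::comm_ring_1 \<Rightarrow> 'a" where
  "chebU 0 a = 1"
| "chebU (Suc 0) a = 2 * a"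
| "chebU (Suc (Suc n)) a = 2 * a * chebU (Suc n) a - chebU n a"

definition xQ :: "rat poly fract" where
  "xQ = to_fract [:0, 1:]"

end

theory Submission
  imports Defs
begin


lemma stern_pos1: "n \<ge> 1 \<Longrightarrow> poly (stern n) 1 > 0"
proof (induction n rule: stern.induct)
  case (1 n)
  show ?case
  proof (cases "n = 1")
    case True then show ?thesis by (simp add: stern.simps)
  next
    case False
    then have n2: "n \<ge> 2" using 1(4) by auto
    show ?thesis
    proof (cases "even n")
      case True
      then have "n div 2 \<ge> 1" using n2 by auto
      then show ?thesis using 1(1) n2 True by (subst stern.simps) simp
    next
      case False
      then have "n div 2 \<ge> 1" using n2 by auto
      then show ?thesis using 1(2,3) n2 False
        by (subst stern.simps) (simp add: add_pos_pos)
    qed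
  qed
qed

lemma stern_nonneg: "coeff (stern n) i \<ge> 0"
proof (induction n arbitrary: i rule: stern.induct)
  case (1 n)
  show ?case
  proof (cases "n = 0 \<or> n = 1")
    case True then show ?thesis using stern.simps[of 0] stern.simps[of 1] by (auto simp add: coeff_1)
  next
    case False
    show ?thesis
    proof (cases "even n")
      case True
      then show ?thesis using 1(1) False by (subst stern.simps) (auto simp: coeff_pCons split: nat.split)
    next
      case F2: False
      then show ?thesis using 1(2,3) False by (subst stern.simps) simp
    qed
  qed
qed

lemma degree_add_nonneg:
  fixes p q :: "int poly"
  assumes "\<And>i. coeff p i \<ge> 0" "\<And>i. coeff q i \<ge> 0"
  shows "degree (p + q) = max (degree p) (degree q)"
proof (rule antisym)
  show "degree (p + q) \<le> max (degree p) (degree q)" by (rule degree_add_le_max)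
next
  show "max (degree p) (degree q) \<le> degree (p + q)"
  proof (cases "degree p \<le> degree q")
    case True
    show ?thesis
    proof (cases "q = 0")
      case True then show ?thesis using \<open>degree p \<le> degree q\<close> by simp
    next
      case False
      have "lead_coeff q > 0" using assms(2)[of "degree q"] False
        by (simp add: order_le_less)
      then have "coeff (p+q) (degree q) \<noteq> 0" using assms(1)[of "degree q"] by simp
      then show ?thesis using True le_degree by fastforce
    qed
  next
    case False
    then have pn: "p \<noteq> 0" by auto
    have "lead_coeff p > 0" using assms(1)[of "degree p"] pn
        by (simp add: order_le_less)
    then have "coeff (p+q) (degree p) \<noteq> 0" using assms(2)[of "degree p"] by simp
    then show ?thesis using False le_degree by fastforce
  qed
qed

lemma e0: "e 0 = 0" by (simp add: e_def stern.simps)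
lemma e1: "e 1 = 0" by (simp add: e_def stern.simps)

lemma e_even: "j \<ge> 1 \<Longrightarrow> e (2*j) = Suc (e j)"
proof -
  assume j: "j \<ge> 1"
  have "stern j \<noteq> 0" using stern_pos1[OF j] by auto
  then show ?thesis using j unfolding e_def
    by (subst stern.simps) (simp add: degree_pCons_eq)
qed

lemma e_odd: "e (2*j+1) = max (e j) (e (Suc j))"
proof (cases "j = 0")
  case True then show ?thesis by (simp add: e0 e1)
next
  case False
  have "stern (2*j+1) = stern j + stern (Suc j)" using False by (subst stern.simps) simp
  then show ?thesis unfolding e_def by (simp add: degree_add_nonneg stern_nonneg)
qed

lemma e_bound: "e (Suc k) \<le> Suc (e k) \<and> e k \<le> Suc (e (Suc k))"
proof (induction k rule: less_induct)
  case (less k)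
  show ?case
  proof (cases "k = 0")
    case True then show ?thesis using e0 e1 e_even[of 1] by simp
  next
    case False
    show ?thesis
    proof (cases "even k")
      case True
      then obtain j where k: "k = 2*j" by auto
      then have j: "j \<ge> 1" "j < k" using False by auto
      have IH: "e (Suc j) \<le> Suc (e j)" using less[OF j(2)] by simp
      show ?thesis using e_even[OF j(1)] e_odd[of j] IH k by simp
    next
      case F2: False
      then obtain j where k: "k = 2*j+1" using oddE by blast
      then have j: "j < k" by auto
      have IH: "e j \<le> Suc (e (Suc j))" using less[OF j] by simp
      have "Suc k = 2 * Suc j" using k by simp
      then show ?thesis using e_even[of "Suc j"] e_odd[of j] IH k by simp
    qed
  qed
qed



definition Hg :: "'a::comm_ring_1 \<Rightarrow> nat \<Rightarrow> 'a" where
  "Hg x n = (\<Sum>m = 1..2^n. x ^ e m)"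
definition gp :: "'a::comm_ring_1 \<Rightarrow> nat \<Rightarrow> 'a" where
  "gp x j = (if e (Suc j) = Suc (e j) then x ^ e j else 0)"
definition gz :: "'a::comm_ring_1 \<Rightarrow> nat \<Rightarrow> 'a" where
  "gz x j = (if e (Suc j) = e j then x ^ e j else 0)"
definition gm :: "'a::comm_ring_1 \<Rightarrow> nat \<Rightarrow> 'a" where
  "gm x j = (if e j = Suc (e (Suc j)) then x ^ e (Suc j) else 0)"
definition Lp where "Lp x n = (\<Sum>j<2^n. gp x j)"
definition Lz where "Lz x n = (\<Sum>j<2^n. gz x j)"
definition Lm where "Lm x n = (\<Sum>j<2^n. gm x j)"

lemma sum_even_odd: "(\<Sum>k<2*(m::nat). f k) = (\<Sum>j<m. f (2*j) + f (2*j+1))"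
  by (induction m) (simp_all add: algebra_simps)

lemma tri: "e (Suc j) = Suc (e j) \<or> e (Suc j) = e j \<or> e j = Suc (e (Suc j))"
  using e_bound[of j] by linarith

lemma pt_H: "x ^ e (Suc j) = x * gp x j + gz x j + gm x j"
  using tri[of j] by (auto simp: gp_def gz_def gm_def)

lemma Hg_L: "Hg x n = x * Lp x n + Lz x n + Lm x n"
proof -
  have "Hg x n = (\<Sum>j<2^n. x ^ e (Suc j))"
    unfolding Hg_def by (rule sum.reindex_bij_witness[where i=Suc and j="\<lambda>m. m - 1"]) auto
  also have "\<dots> = x * Lp x n + Lz x n + Lm x n"
    by (simp add: pt_H Lp_def Lz_def Lm_def sum.distrib sum_distrib_left)
  finally show ?thesis .
qed

lemma ev2: "e (2 * Suc j) = Suc (e (Suc j))" using e_even[of "Suc j"] by simp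
lemma e2: "e (Suc (Suc 0)) = Suc 0" using ev2[of 0] e1 by (simp add: numeral_2_eq_2)

lemma ee1: "j \<ge> 1 \<Longrightarrow> e (2*j) = Suc (e j)" by (rule e_even)
lemma eo1: "e (Suc (2*j)) = max (e j) (e (Suc j))" using e_odd[of j] by simp
lemma ev3: "e (Suc (Suc (2*j))) = Suc (e (Suc j))" using ev2[of j] by simp

lemma pt_p: "gp x (2*j) + gp x (2*j+1) = x * gp x j + gz x j"
proof (cases "j = 0")
  case True then show ?thesis using e0 e1 e2 by (simp add: gp_def gz_def)
next
  case False
  then have j: "j \<ge> 1" by simp
  have a: "e (2*j) = Suc (e j)" by (rule ee1[OF j])
  show ?thesis using tri[of j] by (elim disjE) (simp_all add: gp_def gz_def a eo1 ev3)
qed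

lemma pt_z: "gz x (2*j) + gz x (2*j+1) = x * gp x j + x * gm x j + (if j = 0 then 1 else 0)"
proof (cases "j = 0")
  case True then show ?thesis using e0 e1 e2 by (simp add: gp_def gz_def gm_def)
next
  case False
  then have j: "j \<ge> 1" by simp
  have a: "e (2*j) = Suc (e j)" by (rule ee1[OF j])
  show ?thesis using tri[of j] j by (elim disjE) (simp_all add: gp_def gz_def gm_def a eo1 ev3)
qed

lemma pt_m: "gm x (2*j) + gm x (2*j+1) = gz x j + x * gm x j - (if j = 0 then 1 else 0)"
proof (cases "j = 0")
  case True then show ?thesis using e0 e1 e2 by (simp add: gz_def gm_def)
next
  case False
  then have j: "j \<ge> 1" by simp
  have a: "e (2*j) = Suc (e j)" by (rule ee1[OF j])
  show ?thesis using tri[of j] j by (elim disjE) (simp_all add: gz_def gm_def a eo1 ev3)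
qed


lemma sum_ind0: "(\<Sum>j<(2::nat)^n. (if j = 0 then (1::'a::comm_ring_1) else 0)) = 1"
  by (simp add: sum.delta)

lemma Lp_Suc: "Lp x (Suc n) = x * Lp x n + Lz x n"
  unfolding Lp_def Lz_def by (simp only: power_Suc sum_even_odd pt_p sum.distrib sum_distrib_left)
lemma Lz_Suc: "Lz x (Suc n) = x * Lp x n + x * Lm x n + 1"
  unfolding Lp_def Lz_def Lm_def by (simp only: power_Suc sum_even_odd pt_z sum.distrib sum_distrib_left sum_ind0)
lemma Lm_Suc: "Lm x (Suc n) = Lz x n + x * Lm x n - 1"
  unfolding Lz_def Lm_def by (simp only: power_Suc sum_even_odd pt_m sum.distrib sum_distrib_left sum_subtractf sum_ind0)
lemma L0: "Lp x 0 = 0" "Lz x 0 = 1" "Lm x 0 = 0"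
  using e0 e1 by (simp_all add: Lp_def Lz_def Lm_def gp_def gz_def gm_def)

definition rec4 :: "'a::comm_ring_1 \<Rightarrow> (nat \<Rightarrow> 'a) \<Rightarrow> bool" where
  "rec4 x a \<longleftrightarrow> (\<forall>n. a (Suc (Suc (Suc (Suc n)))) = (1+2*x) * a (Suc (Suc (Suc n))) - x^2 * a (Suc (Suc n)) - (2*x+x^2) * a (Suc n) + 2*x^2 * a n)"

lemma Hg_rec4: "rec4 x (Hg x)"
  unfolding rec4_def Hg_L
  by (simp add: Lp_Suc Lz_Suc Lm_Suc algebra_simps power2_eq_square)

lemma Hg_init: "Hg x 0 = 1" "Hg x 1 = 1 + x" "Hg x 2 = (1+x)^2" "Hg x 3 = (1+x)^3"
  unfolding Hg_L by (simp_all add: Lp_Suc Lz_Suc Lm_Suc L0 eval_nat_numeral algebra_simps)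



lemma fps_part:
  fixes c :: "'a::field"
  assumes r: "rec4 c a" and i: "a 0 = 1" "a 1 = 1 + c" "a 2 = (1+c)^2" "a 3 = (1+c)^3"
  shows "Abs_fps a = (1 - fps_const c * fps_X * (1 + fps_X - fps_X ^ 2)) /
           ((1 - fps_X) * (1 - fps_const c * fps_X) *
            (1 - fps_const c * fps_X - 2 * fps_const c * fps_X ^ 2))"
proof -
  define F where "F = Abs_fps a"
  define D :: "'a fps" where "D = (1 - fps_X) * (1 - fps_const c * fps_X) *
            (1 - fps_const c * fps_X - 2 * fps_const c * fps_X ^ 2)"
  define N :: "'a fps" where "N = 1 - fps_const c * fps_X * (1 + fps_X - fps_X ^ 2)"
  have D': "D = 1 - fps_const (1+2*c) * fps_X^1 + fps_const (c^2) * fps_X^2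
     + fps_const (2*c+c^2) * fps_X^3 - fps_const (2*c^2) * fps_X^4"
    unfolding D_def
    by (simp add: fps_const_add[symmetric] fps_const_mult[symmetric] fps_const_power[symmetric]
        numeral_fps_const algebra_simps eval_nat_numeral del: fps_const_add fps_const_mult fps_const_power)
  have N': "N = 1 - fps_const c * fps_X - fps_const c * fps_X^2 + fps_const c * fps_X^3"
    unfolding N_def by (simp add: algebra_simps eval_nat_numeral)
  have nth: "(F * (fps_const k * fps_X^j)) $ n = k * (if j \<le> n then a (n - j) else 0)" for k j n
  proof -
    have "F * (fps_const k * fps_X^j) = fps_const k * (F * fps_X^j)" by (simp only: ac_simps)
    then have "(F * (fps_const k * fps_X^j)) $ n = (fps_const k * (F * fps_X^j)) $ n" by (rule arg_cong[where f="\<lambda>f. f $ n"])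
    then show ?thesis unfolding fps_mult_left_const_nth fps_X_power_mult_right_nth
      by (simp add: F_def not_less)
  qed
  have nth1: "(F * fps_const k) $ n = k * a n" for k n
    by (simp add: F_def)
  have FD: "F * D = N"
  proof (rule fps_ext)
    fix n
    have lhs: "(F * D) $ n = a n - (1+2*c) * (if 1 \<le> n then a (n-1) else 0)
        + c^2 * (if 2 \<le> n then a (n-2) else 0) + (2*c+c^2) * (if 3 \<le> n then a (n-3) else 0)
        - 2*c^2 * (if 4 \<le> n then a (n-4) else 0)"
      unfolding D' distrib_left right_diff_distrib fps_add_nth fps_sub_nth nth mult_1_right
      by (simp add: F_def)
    have rhs: "N $ n = (if n = 0 then 1 else 0) - (if n = 1 then c else 0) - (if n = 2 then c else 0) + (if n = 3 then c else 0)"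
      unfolding N' by (simp add: fps_X_power_nth)
    show "(F * D) $ n = N $ n"
    proof (cases "n < 4")
      case True
      then have "n = 0 \<or> n = 1 \<or> n = 2 \<or> n = 3" by auto
      have a1: "a (Suc 0) = 1 + c" using i(2) by simp
      then show ?thesis unfolding lhs rhs using \<open>n = 0 \<or> n = 1 \<or> n = 2 \<or> n = 3\<close>
        by (elim disjE) (simp_all add: a1 i algebra_simps power2_eq_square power3_eq_cube)
    next
      case False
      define m where "m = n - 4"
      have m: "n = Suc (Suc (Suc (Suc m)))" using False unfolding m_def by simp
      show ?thesis unfolding lhs rhs using r m unfolding rec4_def
        by (simp add: algebra_simps)
    qed
  qed
  have "D $ 0 = 1" unfolding D' by simp
  then have "N / D = F * D * inverse D" using FD by (simp add: fps_divide_unit)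
  also have "\<dots> = F" using \<open>D $ 0 = 1\<close> by (simp add: mult.assoc inverse_mult_eq_1')
  finally show ?thesis unfolding F_def N_def D_def by simp
qed



lemma rec4_lin:
  assumes "rec4 x a" "rec4 x b" shows "rec4 x (\<lambda>n. p * a n + q * b n)"
  unfolding rec4_def
proof
  fix n
  have ha: "a (Suc (Suc (Suc (Suc n)))) = (1+2*x) * a (Suc (Suc (Suc n))) - x^2 * a (Suc (Suc n)) - (2*x+x^2) * a (Suc n) + 2*x^2 * a n"
    using assms(1) unfolding rec4_def by blast
  have hb: "b (Suc (Suc (Suc (Suc n)))) = (1+2*x) * b (Suc (Suc (Suc n))) - x^2 * b (Suc (Suc n)) - (2*x+x^2) * b (Suc n) + 2*x^2 * b n"
    using assms(2) unfolding rec4_def by blast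
  show "p * a (Suc (Suc (Suc (Suc n)))) + q * b (Suc (Suc (Suc (Suc n)))) =
    (1 + 2 * x) * (p * a (Suc (Suc (Suc n))) + q * b (Suc (Suc (Suc n)))) - x\<^sup>2 * (p * a (Suc (Suc n)) + q * b (Suc (Suc n))) -
    (2 * x + x\<^sup>2) * (p * a (Suc n) + q * b (Suc n)) + 2 * x\<^sup>2 * (p * a n + q * b n)"
    unfolding ha hb by (simp add: algebra_simps)
qed
lemma rec4_const: "rec4 x (\<lambda>n. 1)"
  unfolding rec4_def by (simp add: algebra_simps power2_eq_square)
lemma rec4_pow: "rec4 x (\<lambda>n. x ^ n)"
  unfolding rec4_def by (simp add: algebra_simps power2_eq_square)
lemma rec4_2: "(\<And>n. w (Suc (Suc n)) = x * w (Suc n) + 2*x * w n) \<Longrightarrow> rec4 x w"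
proof -
  assume h: "\<And>n. w (Suc (Suc n)) = x * w (Suc n) + 2*x * w n"
  show ?thesis unfolding rec4_def
  proof
    fix n
    show "w (Suc (Suc (Suc (Suc n)))) = (1+2*x) * w (Suc (Suc (Suc n))) - x^2 * w (Suc (Suc n)) - (2*x+x^2) * w (Suc n) + 2*x^2 * w n"
      unfolding h by (simp add: algebra_simps power2_eq_square)
  qed
qed

lemma rec4_unique:
  assumes "rec4 x a" "rec4 x b" "\<And>n. n < 4 \<Longrightarrow> a n = b n"
  shows "a n = b n"
proof (induction n rule: less_induct)
  case (less n)
  show ?case
  proof (cases "n < 4")
    case True then show ?thesis using assms(3) by simp
  next
    case False
    define m where "m = n - 4"
    have m: "n = Suc (Suc (Suc (Suc m)))" using False unfolding m_def by simp
    have "a (Suc (Suc (Suc (Suc m)))) = b (Suc (Suc (Suc (Suc m))))"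
      using assms(1,2) less[of m] less[of "Suc m"] less[of "Suc (Suc m)"] less[of "Suc (Suc (Suc m))"] m
      unfolding rec4_def by simp
    then show ?thesis using m by simp
  qed
qed

lemma cheb_part:
  fixes x :: complex
  assumes x3: "x \<noteq> 1/3"
  shows "Hg x n = 1 / (1 - 3 * x) + (1 / 2) * x ^ n +
             (csqrt (2 * x) * \<i>) ^ n / (2 * (1 - 3 * x)) *
               (8 * chebT n (- csqrt (2 * x) * \<i> / 4)
                - 3 * (x + 3) * chebU n (- csqrt (2 * x) * \<i> / 4))"
proof -
  define s where "s = csqrt (2 * x) * \<i>"
  have s2: "s^2 = -2*x" unfolding s_def by (simp add: power_mult_distrib)
  have d: "1 - 3*x \<noteq> 0" using x3 by (auto simp: field_simps)
  define t where "t n = s^n * chebT n (-s/4)" for n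
  define u where "u n = s^n * chebU n (-s/4)" for n
  have t2: "t (Suc (Suc n)) = x * t (Suc n) + 2*x * t n" for n
  proof -
    have "t (Suc (Suc n)) = 2 * (-s/4) * s * (s^(Suc n) * chebT (Suc n) (-s/4)) - s^2 * (s^n * chebT n (-s/4))"
      unfolding t_def by (simp add: algebra_simps power2_eq_square)
    also have "\<dots> = x * t (Suc n) + 2*x * t n"
      unfolding t_def using s2 by (simp add: power2_eq_square algebra_simps)
    finally show ?thesis .
  qed
  have u2: "u (Suc (Suc n)) = x * u (Suc n) + 2*x * u n" for n
  proof -
    have "u (Suc (Suc n)) = 2 * (-s/4) * s * (s^(Suc n) * chebU (Suc n) (-s/4)) - s^2 * (s^n * chebU n (-s/4))"
      unfolding u_def by (simp add: algebra_simps power2_eq_square)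
    also have "\<dots> = x * u (Suc n) + 2*x * u n"
      unfolding u_def using s2 by (simp add: power2_eq_square algebra_simps)
    finally show ?thesis .
  qed
  have t01: "t 0 = 1" "t 1 = x/2" unfolding t_def using s2 by (simp_all add: power2_eq_square)
  have u01: "u 0 = 1" "u 1 = x" unfolding u_def using s2 by (simp_all add: power2_eq_square)
  define k where "k = 1 - 3 * x"
  define c where "c = - 3 * (x + 3)"
  have k0: "k \<noteq> 0" using d unfolding k_def .
  define R where "R n = 2 / (2 * k) * 1 + (k / (2 * k)) * x ^ n + 
     (8 / (2 * k)) * t n + (c / (2 * k)) * u n" for n
  have rR: "rec4 x R"
  proof -
    have "rec4 x (\<lambda>n. 2 / (2 * k) * 1 + (k / (2 * k)) * x ^ n)"
      by (rule rec4_lin[OF rec4_const rec4_pow])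
    moreover have "rec4 x (\<lambda>n. (8 / (2 * k)) * t n + (c / (2 * k)) * u n)"
      by (rule rec4_lin[OF rec4_2 rec4_2]) (use t2 u2 in auto)
    ultimately have "rec4 x (\<lambda>n. 1 * (2 / (2 * k) * 1 + (k / (2 * k)) * x ^ n) +
       1 * ((8 / (2 * k)) * t n + (c / (2 * k)) * u n))"
      by (rule rec4_lin)
    then show ?thesis unfolding R_def by (simp add: add.assoc)
  qed
  have RK: "R n * (2 * k) = 2 + k * x ^ n + 8 * t n + c * u n" for n
    unfolding R_def using k0 by (simp add: field_simps)
  have t23: "t (Suc (Suc 0)) = x^2/2 + 2*x" "t (Suc (Suc (Suc 0))) = x^3/2 + 3*x^2"
    using t2[of 0] t2[of "Suc 0"] t01 by (simp_all add: algebra_simps power2_eq_square power3_eq_cube)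
  have u23: "u (Suc (Suc 0)) = x^2 + 2*x" "u (Suc (Suc (Suc 0))) = x^3 + 4*x^2"
    using u2[of 0] u2[of "Suc 0"] u01 by (simp_all add: algebra_simps power2_eq_square power3_eq_cube)
  have init: "Hg x n = R n" if "n < 4" for n
  proof -
    have "n = 0 \<or> n = 1 \<or> n = 2 \<or> n = 3" using that by auto
    have t2n: "t 2 = x^2/2 + 2*x" "t 3 = x^3/2 + 3*x^2" using t23 by (simp_all add: numeral_2_eq_2 numeral_3_eq_3)
    have u2n: "u 2 = x^2 + 2*x" "u 3 = x^3 + 4*x^2" using u23 by (simp_all add: numeral_2_eq_2 numeral_3_eq_3)
    have s1: "Hg x (Suc 0) = 1 + x" "t (Suc 0) = x/2" "u (Suc 0) = x"
      using Hg_init(2)[of x] t01 u01 by simp_all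
    have k2: "2 * k \<noteq> 0" using k0 by simp
    have "Hg x n * (2 * k) = R n * (2 * k)"
      unfolding RK using \<open>n = 0 \<or> n = 1 \<or> n = 2 \<or> n = 3\<close>
      by (elim disjE) (simp_all add: s1 Hg_init t01 u01 t2n u2n k_def c_def field_simps power2_eq_square power3_eq_cube)
    then show ?thesis using k2 by simp
  qed
  have "Hg x n = R n" by (rule rec4_unique[OF Hg_rec4 rR init])
  also have "R n = 1 / k + (1 / 2) * x ^ n + s ^ n / (2 * k) *
               (8 * chebT n (- s / 4) + c * chebU n (- s / 4))"
    unfolding R_def t_def u_def using k0 by (simp add: field_simps)
  finally have fin: "Hg x n = 1 / k + (1 / 2) * x ^ n + s ^ n / (2 * k) *
               (8 * chebT n (- s / 4) + c * chebU n (- s / 4))" .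
  have cU: "8 * T + c * U = 8 * T - 3 * (x + 3) * U" for T U :: complex
    unfolding c_def by (simp add: algebra_simps)
  have sa: "- s / 4 = - csqrt (2 * x) * \<i> / 4" unfolding s_def by simp
  show ?thesis using fin unfolding cU sa unfolding s_def k_def .
qed



lemma map_poly_of_int_add: "map_poly (of_int :: int \<Rightarrow> 'a::comm_ring_1) (p + q) = map_poly of_int p + map_poly of_int q"
  by (rule poly_eqI) (simp add: coeff_map_poly)
lemma map_poly_of_int_sum: "map_poly (of_int :: int \<Rightarrow> 'a::comm_ring_1) (sum f A) = (\<Sum>m\<in>A. map_poly of_int (f m))"
  by (induction A rule: infinite_finite_induct) (simp_all add: map_poly_of_int_add)
lemma map_H: "map_poly (of_int :: int \<Rightarrow> 'a::comm_ring_1) (H n) = (\<Sum>m = 1..2 ^ n. monom 1 (e m))"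
  unfolding H_def map_poly_of_int_sum by (simp add: map_poly_monom)
lemma to_fract_pow: "to_fract (p ^ k) = to_fract p ^ k"
  by (induction k) simp_all

lemma part1_conv: "to_fract (map_poly (of_int :: int \<Rightarrow> rat) (H n)) = Hg xQ n"
  unfolding map_H Hg_def xQ_def by (simp add: monom_altdef to_fract_pow)

lemma part2_conv: "poly (map_poly (of_int :: int \<Rightarrow> complex) (H n)) x = Hg x n"
  unfolding map_H Hg_def by (simp add: poly_sum poly_monom)

theorem mainTheorem6:
  shows "Abs_fps (\<lambda>n. to_fract (map_poly (of_int :: int \<Rightarrow> rat) (H n))) =
           (1 - fps_const xQ * fps_X * (1 + fps_X - fps_X ^ 2)) /
           ((1 - fps_X) * (1 - fps_const xQ * fps_X) *
            (1 - fps_const xQ * fps_X - 2 * fps_const xQ * fps_X ^ 2))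
         \<and> (\<forall>(n::nat) (x::complex). x \<noteq> 1 / 3 \<longrightarrow>
           poly (map_poly (of_int :: int \<Rightarrow> complex) (H n)) x =
             1 / (1 - 3 * x) + (1 / 2) * x ^ n +
             (csqrt (2 * x) * \<i>) ^ n / (2 * (1 - 3 * x)) *
               (8 * chebT n (- csqrt (2 * x) * \<i> / 4)
                - 3 * (x + 3) * chebU n (- csqrt (2 * x) * \<i> / 4)))"
proof
  show "Abs_fps (\<lambda>n. to_fract (map_poly (of_int :: int \<Rightarrow> rat) (H n))) =
           (1 - fps_const xQ * fps_X * (1 + fps_X - fps_X ^ 2)) /
           ((1 - fps_X) * (1 - fps_const xQ * fps_X) *
            (1 - fps_const xQ * fps_X - 2 * fps_const xQ * fps_X ^ 2))"
    unfolding part1_conv by (rule fps_part[OF Hg_rec4 Hg_init])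
  show "\<forall>(n::nat) (x::complex). x \<noteq> 1 / 3 \<longrightarrow>
           poly (map_poly (of_int :: int \<Rightarrow> complex) (H n)) x =
             1 / (1 - 3 * x) + (1 / 2) * x ^ n +
             (csqrt (2 * x) * \<i>) ^ n / (2 * (1 - 3 * x)) *
               (8 * chebT n (- csqrt (2 * x) * \<i> / 4)
                - 3 * (x + 3) * chebU n (- csqrt (2 * x) * \<i> / 4))"
    unfolding part2_conv using cheb_part by blast
qed

end
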